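(* Let $0<q<1$ and let $r,f,g,v,w,u,x$ be complex parameters with $\max\{|xs|,|xu|\}<1$. Then, with the operators acting on the variable $s$, $$\mathbb{T}(r,f,g,v,w,uD_s)\left\{\frac{1}{(xs;q)_\infty}\right\}=\frac{1}{(xs;q)_\infty}\;{}_3\Phi_2\left[\begin{matrix}r,f,g;\\ v,w;\end{matrix}\;q;\,xu\right]$$ and $$\mathbb{E}(r,f,g,v,w,-u\theta_s)\left\{(xs;q)_\infty\right\}=(xs;q)_\infty\;{}_3\Phi_3\left[\begin{matrix}r,f,g;\\ v,w,0;\end{matrix}\;q;\,xu\right].$$
   Context: Throughout $0<q<1$. For complex $\alpha$: $(\alpha;q)_0=1$, $(\alpha;q)_n=\prod_{k=0}^{n-1}(1-\alpha q^k)$, $(\alpha;q)_\infty=\prod_{k=0}^\infty(1-\alpha q^k)$, and $(\alpha_1,\dots,\alpha_m;q)_n=(\alpha_1;q)_n\cdots(\alpha_m;q)_n$. The basic hypergeometric series is ${}_{\mathfrak r}\Phi_{\mathfrak s}\left[\begin{matrix}a_1,\dots,a_{\mathfrak r};\\ b_1,\dots,b_{\mathfrak s};\end{matrix}\,q;z\right]=\sum_{n=0}^\infty\big[(-1)^nq^{\binom n2}\big]^{1+\mathfrak s-\mathfrak r}\frac{(a_1,\dots,a_{\mathfrak r};q)_n}{(b_1,\dots,b_{\mathfrak s};q)_n}\frac{z^n}{(q;q)_n}$. The $q$-difference operators acting on functions of $s$ are $D_s\{F(s)\}=\frac{F(s)-F(qs)}{s}$ and $\theta_s\{F(s)\}=\frac{F(q^{-1}s)-F(s)}{q^{-1}s}$,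 with $D_s^0,\theta_s^0$ the identity. For a parameter $y$, $\mathbb{T}(r,f,g,v,w,yD_s)=\sum_{n=0}^\infty\frac{(r,f,g;q)_n}{(q,v,w;q)_n}(yD_s)^n$ and $\mathbb{E}(r,f,g,v,w,y\theta_s)=\sum_{n=0}^\infty\frac{(-1)^nq^{\binom n2}(r,f,g;q)_n}{(q,v,w;q)_n}(y\theta_s)^n$ (here $y=u$ resp. $y=-u$), applied termwise. *)

theory Defs
  imports "HOL-Analysis.Analysis"
begin

definition qpoch :: "complex \<Rightarrow> complex \<Rightarrow> nat \<Rightarrow> complex" where
  "qpoch a q n = (\<Prod>k<n. 1 - a * q ^ k)"

definition qpoch_inf :: "complex \<Rightarrow> complex \<Rightarrow> complex" where
  "qpoch_inf a q = (\<Prod>k. 1 - a * q ^ k)"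

definition basic_hyp :: "complex list \<Rightarrow> complex list \<Rightarrow> complex \<Rightarrow> complex \<Rightarrow> complex" where
  "basic_hyp as bs q z =
     (\<Sum>n. ((-1) ^ n * q ^ (n choose 2)) powi (1 + int (length bs) - int (length as))
          * (\<Prod>a\<leftarrow>as. qpoch a q n) / (\<Prod>b\<leftarrow>bs. qpoch b q n)
          * z ^ n / qpoch q q n)"

definition qD :: "complex \<Rightarrow> (complex \<Rightarrow> complex) \<Rightarrow> complex \<Rightarrow> complex" where
  "qD q F s = (F s - F (q * s)) / s"

definition qtheta :: "complex \<Rightarrow> (complex \<Rightarrow> complex) \<Rightarrow> complex \<Rightarrow> complex" where
  "qtheta q F s = (F (s / q) - F s) / (s / q)"

definition opT :: "complex \<Rightarrow> complex \<Rightarrow> complex \<Rightarrow> complex \<Rightarrow> complex \<Rightarrow> complex \<Rightarrow> complex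
    \<Rightarrow> (complex \<Rightarrow> complex) \<Rightarrow> complex \<Rightarrow> complex" where
  "opT q r f g v w y F s =
     (\<Sum>n. qpoch r q n * qpoch f q n * qpoch g q n / (qpoch q q n * qpoch v q n * qpoch w q n)
          * (y ^ n * (qD q ^^ n) F s))"

definition opE :: "complex \<Rightarrow> complex \<Rightarrow> complex \<Rightarrow> complex \<Rightarrow> complex \<Rightarrow> complex \<Rightarrow> complex
    \<Rightarrow> (complex \<Rightarrow> complex) \<Rightarrow> complex \<Rightarrow> complex" where
  "opE q r f g v w y F s =
     (\<Sum>n. (-1) ^ n * q ^ (n choose 2) * qpoch r q n * qpoch f q n * qpoch g q n
            / (qpoch q q n * qpoch v q n * qpoch w q n)
          * (y ^ n * (qtheta q ^^ n) F s))"

end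

theory Submission
  imports Defs
begin

lemma qpinf_conv:
  fixes a q :: complex
  assumes "norm q < 1"
  shows "convergent_prod (\<lambda>k. 1 - a * q ^ k)"
proof -
  have "summable (\<lambda>k. norm a * norm q ^ k)"
    using assms by (intro summable_mult summable_geometric) simp
  hence "summable (\<lambda>k. norm ((1 - a * q ^ k) - 1))"
    by (simp add: norm_mult norm_power)
  thus ?thesis
    by (intro abs_convergent_prod_imp_convergent_prod summable_imp_abs_convergent_prod)
qed

lemma qpinf_shift:
  fixes a q :: complex
  assumes "norm q < 1"
  shows "qpoch_inf a q = (1 - a) * qpoch_inf (a * q) q"
proof -
  have "(\<lambda>k. 1 - a * q ^ k) has_prod ((\<Prod>k<1. 1 - a * q ^ k) * (\<Prod>k. 1 - a * q ^ (k + 1)))"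
    by (rule has_prod_ignore_initial_segment'[OF qpinf_conv[OF assms]])
  hence "qpoch_inf a q = (\<Prod>k<1. 1 - a * q ^ k) * (\<Prod>k. 1 - a * q ^ (k + 1))"
    unfolding qpoch_inf_def by (rule has_prod_unique[symmetric])
  thus ?thesis unfolding qpoch_inf_def by (simp add: mult_ac)
qed

lemma qD_iter:
  fixes q :: real and x :: complex
  assumes "0 < q" "q < 1"
  shows "\<forall>t. t \<noteq> 0 \<and> norm (x * t) < 1 \<longrightarrow>
     (qD (of_real q) ^^ n) (\<lambda>t. 1 / qpoch_inf (x * t) (of_real q)) t
       = x ^ n * (1 / qpoch_inf (x * t) (of_real q))"
proof (induction n)
  case 0 then show ?case by simp
next
  case (Suc n)
  show ?case
  proof (intro allI impI)
    fix t :: complex assume t: "t \<noteq> 0 \<and> norm (x * t) < 1"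
    let ?P = "\<lambda>t. qpoch_inf (x * t) (of_real q)"
    have nq: "norm (complex_of_real q) < 1" using assms by simp
    have qt: "of_real q * t \<noteq> 0 \<and> norm (x * (of_real q * t)) < 1"
    proof -
      have "norm (x * (of_real q * t)) = q * norm (x * t)"
        using assms by (simp add: norm_mult)
      also have "\<dots> \<le> norm (x * t)" using assms
        by (intro mult_left_le_one_le) auto
      also have "\<dots> < 1" using t by simp
      finally show ?thesis using t assms by simp
    qed
    have sh: "?P t = (1 - x * t) * ?P (of_real q * t)"
      using qpinf_shift[OF nq, of "x * t"] by (simp add: mult_ac)
    have ne: "1 - x * t \<noteq> 0"
    proof
      assume "1 - x * t = 0" then have "x * t = 1" by simp
      with t show False by simp
    qed
    have I1: "(qD (of_real q) ^^ n) (\<lambda>t. 1 / ?P t) t = x ^ n * (1 / ?P t)"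
      using Suc.IH t by blast
    have I2: "(qD (of_real q) ^^ n) (\<lambda>t. 1 / ?P t) (of_real q * t) = x ^ n * (1 / ?P (of_real q * t))"
      using Suc.IH qt by blast
    have "(qD (of_real q) ^^ Suc n) (\<lambda>t. 1 / ?P t) t
        = (x ^ n * (1 / ?P t) - x ^ n * (1 / ?P (of_real q * t))) / t"
      by (simp only: funpow.simps o_apply qD_def I1 I2)
    also have "\<dots> = x ^ Suc n * (1 / ?P t)"
    proof (cases "?P (of_real q * t) = 0")
      case True
      then show ?thesis using sh by simp
    next
      case False
      then have "?P t \<noteq> 0" using sh ne by simp
      have c: "1 / ?P (of_real q * t) = (1 - x * t) / ?P t"
        using sh ne False by simp
      have "x ^ n * (1 / ?P t) - x ^ n * (1 / ?P (of_real q * t)) = x ^ n * (x * t / ?P t)"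
        unfolding c by (simp add: diff_divide_distrib[symmetric] algebra_simps)
      then show ?thesis using t by simp
    qed
    finally show "(qD (of_real q) ^^ Suc n) (\<lambda>t. 1 / ?P t) t = x ^ Suc n * (1 / ?P t)" .
  qed
qed

lemma qtheta_iter:
  fixes q :: real and x :: complex
  assumes "0 < q" "q < 1"
  shows "\<forall>t. t \<noteq> 0 \<longrightarrow>
     (qtheta (of_real q) ^^ n) (\<lambda>t. qpoch_inf (x * t) (of_real q)) t
       = (- x) ^ n * qpoch_inf (x * t) (of_real q)"
proof (induction n)
  case 0 then show ?case by simp
next
  case (Suc n)
  show ?case
  proof (intro allI impI)
    fix t :: complex assume t: "t \<noteq> 0"
    let ?P = "\<lambda>t. qpoch_inf (x * t) (of_real q)"
    have nq: "norm (complex_of_real q) < 1" using assms by simp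
    have qn: "complex_of_real q \<noteq> 0" using assms by simp
    have sh: "?P (t / of_real q) = (1 - x * t / of_real q) * ?P t"
      using qpinf_shift[OF nq, of "x * t / of_real q"] qn by (simp add: mult_ac)
    have I1: "(qtheta (of_real q) ^^ n) ?P t = (- x) ^ n * ?P t"
      using Suc.IH t by blast
    have I2: "(qtheta (of_real q) ^^ n) ?P (t / of_real q) = (- x) ^ n * ?P (t / of_real q)"
      using Suc.IH t qn by simp
    have "(qtheta (of_real q) ^^ Suc n) ?P t
        = ((- x) ^ n * ?P (t / of_real q) - (- x) ^ n * ?P t) / (t / of_real q)"
      by (simp only: funpow.simps o_apply qtheta_def I1 I2)
    also have "\<dots> = ((- x) ^ n * (- (x * t / of_real q)) * ?P t) / (t / of_real q)"
      unfolding sh by (simp add: algebra_simps)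
    also have "\<dots> = (- x) ^ Suc n * ?P t"
      using t qn by simp
    finally show "(qtheta (of_real q) ^^ Suc n) ?P t = (- x) ^ Suc n * ?P t" .
  qed
qed

lemma qpoch_Suc: "qpoch a c (Suc n) = qpoch a c n * (1 - a * c ^ n)"
  by (simp add: qpoch_def)

lemma summ3:
  fixes c z r f g v w :: complex
  assumes c: "norm c < 1" and z: "norm z < 1"
  shows "summable (\<lambda>n. norm (qpoch r c n * qpoch f c n * qpoch g c n
            / (qpoch c c n * qpoch v c n * qpoch w c n) * z ^ n))"
proof -
  define T where "T = (\<lambda>n. qpoch r c n * qpoch f c n * qpoch g c n
            / (qpoch c c n * qpoch v c n * qpoch w c n) * z ^ n)"
  define R where "R = (\<lambda>n. (1 - r * c ^ n) * (1 - f * c ^ n) * (1 - g * c ^ n) * z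
            / ((1 - c * c ^ n) * (1 - v * c ^ n) * (1 - w * c ^ n)))"
  define \<rho> where "\<rho> = (1 + norm z) / 2"
  have \<rho>: "norm z < \<rho>" "\<rho> < 1" using z by (auto simp: \<rho>_def)
  have cn: "(\<lambda>n. c ^ n) \<longlonglongrightarrow> 0" using c by (rule LIMSEQ_power_zero)
  have "R \<longlonglongrightarrow> (1 - r * 0) * (1 - f * 0) * (1 - g * 0) * z
            / ((1 - c * 0) * (1 - v * 0) * (1 - w * 0))"
    unfolding R_def by (intro tendsto_intros cn) simp
  hence "R \<longlonglongrightarrow> z" by simp
  hence "(\<lambda>n. norm (R n)) \<longlonglongrightarrow> norm z" by (rule tendsto_norm)
  hence "eventually (\<lambda>n. norm (R n) < \<rho>) sequentially"
    using \<rho> by (intro order_tendstoD) auto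
  then obtain N where N: "\<And>n. n \<ge> N \<Longrightarrow> norm (R n) < \<rho>"
    by (auto simp: eventually_sequentially)
  have "summable (\<lambda>n. norm (T n))"
  proof (rule summable_ratio_test[OF \<rho>(2)])
    fix n assume n: "n \<ge> N"
    define D where "D = qpoch c c n * qpoch v c n * qpoch w c n"
    define d where "d = (1 - c * c ^ n) * (1 - v * c ^ n) * (1 - w * c ^ n)"
    have TS: "T (Suc n) = qpoch r c n * qpoch f c n * qpoch g c n
         * ((1 - r * c ^ n) * (1 - f * c ^ n) * (1 - g * c ^ n)) / (D * d) * (z ^ n * z)"
      unfolding T_def D_def d_def by (simp add: qpoch_Suc mult_ac)
    have "norm (T (Suc n)) \<le> \<rho> * norm (T n)"
    proof (cases "D * d = 0")
      case True
      then have "T (Suc n) = 0" using TS by simp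
      moreover have "0 \<le> \<rho>" using \<rho>(1) norm_ge_zero[of z] by linarith
      ultimately show ?thesis by simp
    next
      case False
      have Tn: "T n = qpoch r c n * qpoch f c n * qpoch g c n / D * z ^ n"
        unfolding T_def D_def by simp
      have Rn: "R n = (1 - r * c ^ n) * (1 - f * c ^ n) * (1 - g * c ^ n) * z / d"
        unfolding R_def d_def by simp
      have "T (Suc n) = T n * R n"
        unfolding TS Tn Rn using False by (simp add: field_simps)
      then have "norm (T (Suc n)) = norm (T n) * norm (R n)" by (simp add: norm_mult)
      also have "\<dots> \<le> norm (T n) * \<rho>"
        using N[OF n] by (intro mult_left_mono) auto
      finally show ?thesis by (simp add: mult_ac)
    qed
    then show "norm (norm (T (Suc n))) \<le> \<rho> * norm (norm (T n))" by simp
  qed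
  thus ?thesis unfolding T_def .
qed

theorem corollary1:
  fixes q :: real and r f g v w u x s :: complex
  assumes "0 < q" and "q < 1"
    and "s \<noteq> 0"
    and "max (norm (x * s)) (norm (x * u)) < 1"
  shows "opT (of_real q) r f g v w u (\<lambda>t. 1 / qpoch_inf (x * t) (of_real q)) s
           = 1 / qpoch_inf (x * s) (of_real q) * basic_hyp [r, f, g] [v, w] (of_real q) (x * u)
    \<and> opE (of_real q) r f g v w (- u) (\<lambda>t. qpoch_inf (x * t) (of_real q)) s
           = qpoch_inf (x * s) (of_real q) * basic_hyp [r, f, g] [v, w, 0] (of_real q) (x * u)"
proof -
  define c where "c = complex_of_real q"
  define z where "z = x * u"
  define K where "K = (\<lambda>n. qpoch r c n * qpoch f c n * qpoch g c n
            / (qpoch c c n * qpoch v c n * qpoch w c n))"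
  have nc: "norm c < 1" using assms by (simp add: c_def)
  have xs: "norm (x * s) < 1" and nz: "norm z < 1" using assms by (auto simp: z_def)
  have sn: "summable (\<lambda>n. norm (K n * z ^ n))"
    using summ3[OF nc nz, of r f g v w] by (simp add: K_def)
  have sK: "summable (\<lambda>n. K n * z ^ n)" using sn by (rule summable_norm_cancel)
  define F where "F = (\<lambda>t. 1 / qpoch_inf (x * t) c)"
  define G where "G = (\<lambda>t. qpoch_inf (x * t) c)"
  have DF: "\<And>n. (qD c ^^ n) F s = x ^ n * F s"
    using qD_iter[OF assms(1,2), where x = x] assms(3) xs unfolding F_def c_def by blast
  have TG: "\<And>n. (qtheta c ^^ n) G s = (- x) ^ n * G s"
    using qtheta_iter[OF assms(1,2), where x = x] assms(3) unfolding G_def c_def by blast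
  have bh1: "basic_hyp [r, f, g] [v, w] c z = (\<Sum>n. K n * z ^ n)"
    unfolding basic_hyp_def K_def by (simp add: mult_ac)
  have bh2: "basic_hyp [r, f, g] [v, w, 0] c z = (\<Sum>n. (-1) ^ n * c ^ (n choose 2) * (K n * z ^ n))"
    unfolding basic_hyp_def K_def by (simp add: mult_ac qpoch_def)
  have "opT c r f g v w u F s = (\<Sum>n. K n * z ^ n * F s)"
    unfolding opT_def DF K_def z_def by (simp add: mult_ac power_mult_distrib)
  also have "\<dots> = (\<Sum>n. K n * z ^ n) * F s"
    by (rule suminf_mult2[OF sK, symmetric])
  finally have P1: "opT c r f g v w u F s = F s * basic_hyp [r, f, g] [v, w] c z"
    using bh1 by simp
  have sL: "summable (\<lambda>n. (-1) ^ n * c ^ (n choose 2) * (K n * z ^ n))"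
  proof (rule summable_comparison_test'[OF sn])
    fix n :: nat
    have "norm (c ^ (n choose 2)) \<le> 1" using nc by (simp add: norm_power power_le_one)
    then show "norm ((-1) ^ n * c ^ (n choose 2) * (K n * z ^ n)) \<le> norm (K n * z ^ n)"
      by (simp add: norm_mult norm_power mult_left_le_one_le)
  qed
  have e: "\<And>n. (- u) ^ n * ((- x) ^ n * G s) = z ^ n * G s"
  proof -
    fix n
    have "(- u) ^ n * (- x) ^ n = z ^ n"
      unfolding power_mult_distrib[symmetric] by (simp add: z_def mult.commute)
    then show "(- u) ^ n * ((- x) ^ n * G s) = z ^ n * G s" by (simp add: mult.assoc[symmetric])
  qed
  have "opE c r f g v w (- u) G s = (\<Sum>n. (-1) ^ n * c ^ (n choose 2) * (K n * z ^ n) * G s)"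
    unfolding opE_def TG e K_def by (simp add: mult_ac)
  also have "\<dots> = (\<Sum>n. (-1) ^ n * c ^ (n choose 2) * (K n * z ^ n)) * G s"
    by (rule suminf_mult2[OF sL, symmetric])
  finally have P2: "opE c r f g v w (- u) G s = G s * basic_hyp [r, f, g] [v, w, 0] c z"
    using bh2 by simp
  show ?thesis using P1 P2 unfolding c_def z_def F_def G_def by simp
qed

end
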